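(* Let $n>5$ and let $S\in\mathcal D_n^s$ be such that both of its directed cycles have odd length. Then: (i) if $n$ is even, the maximal energy among such $S$ is attained by $S\cong D_n^s[3,n-3]$; (ii) if $n$ is odd, the maximal energy among such $S$ is attained by $S\cong D_n^s[3,n-4]$; (iii) the minimal energy among such $S$ is attained by $S\cong D_n^s[3,3]$.
   Context: A signed digraph (sidigraph) is a digraph in which every arc carries a sign $+1$ or $-1$; the energy of a sidigraph is the sum of the absolute values of the real parts of the eigenvalues of its signed adjacency matrix. The sign of a directed cycle is the product of the signs of its arcs; $C_k$ denotes a positive directed cycle of length $k$. It is known that for odd $k$ every directed cycle of length $k$ (positive or negative) has energy $\csc\frac{\pi}{2k}$. $\mathcal D_n^s$ is the class of sidigraphs on $n$ vertices whose underlying graph is connected and which contain exactly two directed cycles, these two cycles being vertex-disjoint. The energy of $S\in\mathcal D_n^s$ equals the sum of the energies of its two directed cycles. For integers $p,q\ge 2$ with $p+q\le n$, $D_n^s[p,q]$ denotes a member of $\mathcal D_n^s$ whose two directed cycles are $C_p$ and $C_q$. *)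

theory Defs
  imports Complex_Main "HOL-Computational_Algebra.Polynomial" "Jordan_Normal_Form.Char_Poly"
begin

text \<open>A sidigraph on the vertex set {0..<n} is given by its arc set A and a sign
function sg (only relevant on arcs), with signs in {1,-1}; no loops.\<close>

definition is_sidigraph :: "nat \<Rightarrow> (nat \<times> nat) set \<Rightarrow> (nat \<times> nat \<Rightarrow> int) \<Rightarrow> bool" where
  "is_sidigraph n A sg \<longleftrightarrow> A \<subseteq> {0..<n} \<times> {0..<n} \<and> (\<forall>v. (v, v) \<notin> A)
     \<and> (\<forall>a\<in>A. sg a = 1 \<or> sg a = -1)"

definition underlying_connected :: "nat \<Rightarrow> (nat \<times> nat) set \<Rightarrow> bool" where
  "underlying_connected n A \<longleftrightarrow> (\<forall>u\<in>{0..<n}. \<forall>v\<in>{0..<n}. (u, v) \<in> (A \<union> A\<inverse>)\<^sup>*)"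

definition is_dcycle_list :: "(nat \<times> nat) set \<Rightarrow> nat list \<Rightarrow> bool" where
  "is_dcycle_list A vs \<longleftrightarrow> distinct vs \<and> length vs \<ge> 2 \<and>
     (\<forall>i<length vs. (vs ! i, vs ! ((i + 1) mod length vs)) \<in> A)"

definition cycle_arcs :: "nat list \<Rightarrow> (nat \<times> nat) set" where
  "cycle_arcs vs = {(vs ! i, vs ! ((i + 1) mod length vs)) | i. i < length vs}"

text \<open>The directed cycles of a digraph, each identified with its arc set.\<close>
definition dcycles :: "(nat \<times> nat) set \<Rightarrow> (nat \<times> nat) set set" where
  "dcycles A = {cycle_arcs vs | vs. is_dcycle_list A vs}"

definition cycle_length :: "(nat \<times> nat) set \<Rightarrow> nat" where
  "cycle_length C = card C"

definition cycle_vertices :: "(nat \<times> nat) set \<Rightarrow> nat set" where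
  "cycle_vertices C = fst ` C"

definition cycle_sign :: "(nat \<times> nat \<Rightarrow> int) \<Rightarrow> (nat \<times> nat) set \<Rightarrow> int" where
  "cycle_sign sg C = (\<Prod>a\<in>C. sg a)"

definition in_Dns :: "nat \<Rightarrow> (nat \<times> nat) set \<Rightarrow> (nat \<times> nat \<Rightarrow> int) \<Rightarrow> bool" where
  "in_Dns n A sg \<longleftrightarrow> is_sidigraph n A sg \<and> underlying_connected n A \<and>
     card (dcycles A) = 2 \<and>
     (\<forall>C1\<in>dcycles A. \<forall>C2\<in>dcycles A. C1 \<noteq> C2 \<longrightarrow> cycle_vertices C1 \<inter> cycle_vertices C2 = {})"

definition is_Dnspq :: "nat \<Rightarrow> nat \<Rightarrow> nat \<Rightarrow> (nat \<times> nat) set \<Rightarrow> (nat \<times> nat \<Rightarrow> int) \<Rightarrow> bool" where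
  "is_Dnspq n p q A sg \<longleftrightarrow> 2 \<le> p \<and> 2 \<le> q \<and> p + q \<le> n \<and> in_Dns n A sg \<and>
     (\<exists>C1\<in>dcycles A. \<exists>C2\<in>dcycles A. C1 \<noteq> C2 \<and> cycle_length C1 = p \<and> cycle_length C2 = q
        \<and> cycle_sign sg C1 = 1 \<and> cycle_sign sg C2 = 1)"

definition signed_adj :: "nat \<Rightarrow> (nat \<times> nat) set \<Rightarrow> (nat \<times> nat \<Rightarrow> int) \<Rightarrow> complex mat" where
  "signed_adj n A sg = mat n n (\<lambda>(i, j). if (i, j) \<in> A then of_int (sg (i, j)) else 0)"

definition energy :: "nat \<Rightarrow> (nat \<times> nat) set \<Rightarrow> (nat \<times> nat \<Rightarrow> int) \<Rightarrow> real" where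
  "energy n A sg = (let p = char_poly (signed_adj n A sg) in
     (\<Sum>z\<in>{z. poly p z = 0}. real (order z p) * \<bar>Re z\<bar>))"

end

theory Submission
  imports Defs "HOL-Combinatorics.Cycles" "HOL-Analysis.Analysis"
begin


lemma cycle_arcs_image: "cycle_arcs ws = (\<lambda>i. (ws ! i, ws ! ((i+1) mod length ws))) ` {..<length ws}"
  unfolding cycle_arcs_def by auto

lemma card_cycle_arcs: assumes "distinct ws" shows "card (cycle_arcs ws) = length ws"
proof -
  have "inj_on (\<lambda>i. (ws ! i, ws ! ((i+1) mod length ws))) {..<length ws}"
    using assms by (auto simp: inj_on_def nth_eq_iff_index_eq)
  thus ?thesis unfolding cycle_arcs_image by (simp add: card_image)
qed

lemma finite_cycle_arcs: "finite (cycle_arcs ws)"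
  unfolding cycle_arcs_image by simp

lemma fst_cycle_arcs: "fst ` cycle_arcs ws = set ws"
  unfolding cycle_arcs_image by (force simp: in_set_conv_nth image_iff)

lemma cycle_arcs_unique:
  assumes "distinct ws" "(a,b) \<in> cycle_arcs ws" "(a,c) \<in> cycle_arcs ws" shows "b = c"
  using assms unfolding cycle_arcs_def by (auto simp: nth_eq_iff_index_eq)

lemma cycle_arcs_sub_eq:
  assumes ws: "distinct ws" and vs: "distinct vs" "vs \<noteq> []"
    and arcs: "\<forall>i<length vs. (vs ! i, vs ! ((i+1) mod length vs)) \<in> cycle_arcs ws"
  shows "cycle_arcs vs = cycle_arcs ws"
proof -
  let ?L = "length vs" and ?r = "length ws"
  have sub: "cycle_arcs vs \<subseteq> cycle_arcs ws" using arcs unfolding cycle_arcs_def by auto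
  have S1: "set vs \<subseteq> set ws" using sub fst_cycle_arcs by (metis image_mono)
  have clos: "ws ! ((k+1) mod ?r) \<in> set vs" if k: "k < ?r" "ws ! k \<in> set vs" for k
  proof -
    obtain i where i: "i < ?L" "vs ! i = ws ! k" using k by (metis in_set_conv_nth)
    have a1: "(ws ! k, vs ! ((i+1) mod ?L)) \<in> cycle_arcs ws" using arcs i by auto
    have a2: "(ws ! k, ws ! ((k+1) mod ?r)) \<in> cycle_arcs ws" using k unfolding cycle_arcs_def by auto
    have "vs ! ((i+1) mod ?L) = ws ! ((k+1) mod ?r)" using cycle_arcs_unique[OF ws a1 a2] .
    moreover have "(i+1) mod ?L < ?L" using vs by simp
    ultimately show ?thesis by (metis nth_mem)
  qed
  have rpos: "?r > 0" using S1 vs by (metis card_length card_0_eq card_mono empty_subsetI finite_set gr0I le_zero_eq set_empty subset_antisym)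
  obtain k0 where k0: "k0 < ?r" "ws ! k0 \<in> set vs"
    using S1 vs by (metis hd_in_set in_set_conv_nth subsetD)
  have all: "ws ! ((k0 + j) mod ?r) \<in> set vs" for j
  proof (induction j)
    case 0 thus ?case using k0 by simp
  next
    case (Suc j)
    have "ws ! (((k0 + j) mod ?r + 1) mod ?r) \<in> set vs" using clos[OF _ Suc] rpos by simp
    thus ?case by (simp add: mod_Suc_eq)
  qed
  have "set ws \<subseteq> set vs"
  proof
    fix x assume "x \<in> set ws"
    then obtain m where m: "m < ?r" "x = ws ! m" by (metis in_set_conv_nth)
    have "(k0 + (m + ?r - k0)) mod ?r = m" using m k0 by simp
    thus "x \<in> set vs" using all[of "m + ?r - k0"] m by simp
  qed
  hence "set vs = set ws" using S1 by blast
  hence "?L = ?r" using ws vs by (metis distinct_card)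
  thus ?thesis using sub card_cycle_arcs[OF ws] card_cycle_arcs[OF vs(1)] finite_cycle_arcs
    by (metis card_subset_eq)
qed


lemma cycle_of_list_nth:
  assumes "distinct ws" "i < length ws"
  shows "cycle_of_list ws (ws ! i) = ws ! ((i+1) mod length ws)"
proof -
  have "map (cycle_of_list ws ^^ 1) ws = rotate 1 ws" using cyclic_rotation[OF assms(1)] .
  hence "map (cycle_of_list ws) ws = rotate1 ws" by simp
  hence "cycle_of_list ws (ws ! i) = rotate1 ws ! i" using assms(2) by (metis nth_map)
  thus ?thesis using assms(2) nth_rotate1 by simp
qed

lemma cycle_arcs_cycle_of_list:
  assumes "distinct ws" shows "cycle_arcs ws = (\<lambda>x. (x, cycle_of_list ws x)) ` set ws"
proof -
  have "cycle_arcs ws = (\<lambda>i. (ws ! i, cycle_of_list ws (ws ! i))) ` {..<length ws}"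
    unfolding cycle_arcs_image using cycle_of_list_nth[OF assms] by auto
  also have "\<dots> = (\<lambda>x. (x, cycle_of_list ws x)) ` ((!) ws ` {..<length ws})" by (simp add: image_image)
  also have "(!) ws ` {..<length ws} = set ws" by (auto simp: in_set_conv_nth)
  finally show ?thesis .
qed

lemma sign_cycle_of_list:
  "distinct ws \<Longrightarrow> sign (cycle_of_list ws) = (-1) ^ (length ws - 1)"
proof (induction ws rule: cycle_of_list.induct)
  case (1 i j cs)
  have "sign (cycle_of_list (i # j # cs)) = sign (Transposition.transpose i j) * sign (cycle_of_list (j # cs))"
    by (simp add: sign_compose permutation_swap_id permutation_of_cycle)
  also have "\<dots> = - ((-1) ^ (length (j # cs) - 1))" using 1 by (simp add: sign_swap_id)
  also have "\<dots> = (-1) ^ (length (i # j # cs) - 1)" by simp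
  finally show ?case .
qed (auto simp: sign_id)

lemma support_nth: "i < least_power p a \<Longrightarrow> support p a ! i = (p ^^ i) a"
  by simp

lemma support_dcycle:
  assumes perm: "\<sigma> permutes {0..<n}" and arcs: "\<forall>i. \<sigma> i \<noteq> i \<longrightarrow> (i, \<sigma> i) \<in> A"
    and a: "\<sigma> a \<noteq> a"
  shows "is_dcycle_list A (support \<sigma> a)"
    "\<forall>x\<in>set (support \<sigma> a). (x, \<sigma> x) \<in> cycle_arcs (support \<sigma> a)"
proof -
  have pm: "permutation \<sigma>" using perm permutation_permutes by blast
  define l where "l = least_power \<sigma> a"
  define L where "L = support \<sigma> a"
  have l2: "l > 1" using least_power_gt_one[OF pm a] unfolding l_def by simp
  have dist: "distinct L" using cycle_of_permutation[OF pm] unfolding L_def .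
  have len: "length L = l" unfolding L_def l_def by simp
  have nth: "L ! i = (\<sigma> ^^ i) a" if "i < l" for i using that unfolding L_def l_def by simp
  have lp: "(\<sigma> ^^ l) a = a" using least_power_of_permutation(1)[OF pm] unfolding l_def .
  have succ: "\<sigma> (L ! i) = L ! ((i+1) mod l)" if i: "i < l" for i
  proof (cases "i + 1 < l")
    case True thus ?thesis using i nth by simp
  next
    case False
    hence e: "i + 1 = l" using i by simp
    have "\<sigma> (L ! i) = (\<sigma> ^^ (i+1)) a" using nth[OF i] by simp
    also have "\<dots> = a" using lp e by simp
    also have "\<dots> = L ! ((i+1) mod l)" using e nth[of 0] l2 by simp
    finally show ?thesis .
  qed
  have ne: "\<sigma> (L ! i) \<noteq> L ! i" if i: "i < l" for i
  proof -
    have m: "(i+1) mod l \<noteq> i"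
    proof (cases "i+1 < l")
      case True thus ?thesis by simp
    next
      case False hence "i + 1 = l" using i by simp
      thus ?thesis using l2 by simp
    qed
    have "(i+1) mod l < l" using l2 by simp
    hence "L ! ((i+1) mod l) = L ! i \<longleftrightarrow> (i+1) mod l = i"
      using nth_eq_iff_index_eq[OF dist] i len by simp
    thus ?thesis using succ[OF i] m by simp
  qed
  show "is_dcycle_list A L"
    unfolding is_dcycle_list_def
  proof (intro conjI allI impI)
    show "distinct L" by (rule dist)
    show "2 \<le> length L" using l2 len by simp
    fix i assume i: "i < length L"
    have "(L ! i, \<sigma> (L ! i)) \<in> A" using arcs ne[of i] i len by simp
    thus "(L ! i, L ! ((i + 1) mod length L)) \<in> A" using succ[of i] i len by simp
  qed
  show "\<forall>x\<in>set L. (x, \<sigma> x) \<in> cycle_arcs L"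
  proof
    fix x assume "x \<in> set L"
    then obtain i where i: "i < l" "x = L ! i" using len by (auto simp: in_set_conv_nth)
    have "(L ! i, L ! ((i+1) mod length L)) \<in> cycle_arcs L" unfolding cycle_arcs_def using i len by blast
    thus "(x, \<sigma> x) \<in> cycle_arcs L" using succ[OF i(1)] len i(2) by simp
  qed
qed


lemma classify:
  assumes d1: "is_dcycle_list A vs1" and d2: "is_dcycle_list A vs2"
    and dc: "dcycles A = {cycle_arcs vs1, cycle_arcs vs2}"
    and disj: "set vs1 \<inter> set vs2 = {}"
    and perm: "\<sigma> permutes {0..<n}" and arcs: "\<forall>i. \<sigma> i \<noteq> i \<longrightarrow> (i, \<sigma> i) \<in> A"
  shows "\<sigma> \<in> {id, cycle_of_list vs1, cycle_of_list vs2, cycle_of_list vs1 \<circ> cycle_of_list vs2}"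
proof -
  let ?f1 = "cycle_of_list vs1" and ?f2 = "cycle_of_list vs2"
  have dist1: "distinct vs1" and dist2: "distinct vs2" using d1 d2 unfolding is_dcycle_list_def by auto
  have pm: "permutation \<sigma>" using perm permutation_permutes by blast
  have K: "(a \<in> set vs1 \<and> (\<forall>x\<in>set vs1. \<sigma> x = ?f1 x)) \<or> (a \<in> set vs2 \<and> (\<forall>x\<in>set vs2. \<sigma> x = ?f2 x))"
    if a: "\<sigma> a \<noteq> a" for a
  proof -
    let ?L = "support \<sigma> a"
    have dl: "is_dcycle_list A ?L" and sa: "\<forall>x\<in>set ?L. (x, \<sigma> x) \<in> cycle_arcs ?L"
      using support_dcycle[OF perm arcs a] by auto
    have "cycle_arcs ?L \<in> dcycles A" unfolding dcycles_def using dl by blast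
    hence c: "cycle_arcs ?L = cycle_arcs vs1 \<or> cycle_arcs ?L = cycle_arcs vs2" using dc by auto
    have aL: "a \<in> set ?L" using least_power_of_permutation(2)[OF pm, of a] by force
    have gen: "a \<in> set ws \<and> (\<forall>x\<in>set ws. \<sigma> x = cycle_of_list ws x)"
      if ws: "distinct ws" "cycle_arcs ?L = cycle_arcs ws" for ws
    proof -
      have sL: "set ?L = set ws" using fst_cycle_arcs[of ?L] fst_cycle_arcs[of ws] ws(2) by simp
      have "\<sigma> x = cycle_of_list ws x" if x: "x \<in> set ws" for x
      proof -
        have xL: "x \<in> set ?L" using sL x by (simp only:)
        have "(x, \<sigma> x) \<in> cycle_arcs ?L" using sa xL by blast
        hence "(x, \<sigma> x) \<in> cycle_arcs ws" using ws(2) by (simp only:)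
        moreover have "(x, cycle_of_list ws x) \<in> cycle_arcs ws"
          using cycle_arcs_cycle_of_list[OF ws(1)] x by auto
        ultimately show ?thesis using cycle_arcs_unique[OF ws(1)] by blast
      qed
      thus ?thesis using aL sL by auto
    qed
    show ?thesis using c gen[OF dist1] gen[OF dist2] by blast
  qed
  have o1: "?f1 x = x" if "x \<notin> set vs1" for x using id_outside_supp that by metis
  have o2: "?f2 x = x" if "x \<notin> set vs2" for x using id_outside_supp that by metis
  have i2: "?f2 x \<in> set vs2" if "x \<in> set vs2" for x
    using cycle_permutes[of vs2] that by (simp add: permutes_in_image)
  have o12: "?f1 (?f2 x) = ?f2 x" if "x \<in> set vs2" for x
    using i2[OF that] o1 disj by blast
  have out: "\<sigma> x = x" if "x \<notin> set vs1" "x \<notin> set vs2" for x using K that by blast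
  have V1: "(\<forall>x\<in>set vs1. \<sigma> x = ?f1 x) \<or> (\<forall>x\<in>set vs1. \<sigma> x = x)"
    using K disj by blast
  have V2: "(\<forall>x\<in>set vs2. \<sigma> x = ?f2 x) \<or> (\<forall>x\<in>set vs2. \<sigma> x = x)"
    using K disj by blast
  show ?thesis
  proof (cases "\<forall>x\<in>set vs1. \<sigma> x = ?f1 x")
    case P1: True
    show ?thesis
    proof (cases "\<forall>x\<in>set vs2. \<sigma> x = ?f2 x")
      case True
      have "\<sigma> = ?f1 \<circ> ?f2"
      proof
        fix x show "\<sigma> x = (?f1 \<circ> ?f2) x"
          using True P1 out o1 o2 o12 disj by (cases "x \<in> set vs1"; cases "x \<in> set vs2") auto
      qed
      thus ?thesis by simp
    next
      case False
      hence F: "\<forall>x\<in>set vs2. \<sigma> x = x" using V2 by blast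
      have "\<sigma> = ?f1"
      proof
        fix x show "\<sigma> x = ?f1 x"
          using F P1 out o1 disj by (cases "x \<in> set vs1"; cases "x \<in> set vs2") auto
      qed
      thus ?thesis by simp
    qed
  next
    case False
    hence F1: "\<forall>x\<in>set vs1. \<sigma> x = x" using V1 by blast
    show ?thesis
    proof (cases "\<forall>x\<in>set vs2. \<sigma> x = ?f2 x")
      case True
      have "\<sigma> = ?f2"
      proof
        fix x show "\<sigma> x = ?f2 x"
          using True F1 out o2 disj by (cases "x \<in> set vs1"; cases "x \<in> set vs2") auto
      qed
      thus ?thesis by simp
    next
      case False
      hence F: "\<forall>x\<in>set vs2. \<sigma> x = x" using V2 by blast
      have "\<sigma> = id"
      proof
        fix x show "\<sigma> x = id x"
          using F F1 out by (cases "x \<in> set vs1"; cases "x \<in> set vs2") auto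
      qed
      thus ?thesis by simp
    qed
  qed
qed

lemma cpm_entry:
  assumes "is_sidigraph n A sg" "i < n" "j < n"
  shows "char_poly_matrix (signed_adj n A sg) $$ (i, j) =
    (if i = j then [:0,1:] else (if (i,j) \<in> A then [: - of_int (sg (i,j)) :] else 0))"
  using assms unfolding char_poly_matrix_def signed_adj_def is_sidigraph_def by auto

lemma prod_term:
  assumes sid: "is_sidigraph n A sg" and perm: "\<sigma> permutes {0..<n}" and S: "S \<subseteq> {0..<n}"
    and inS: "\<forall>i\<in>S. (i, \<sigma> i) \<in> A \<and> \<sigma> i \<noteq> i" and outS: "\<forall>i\<in>{0..<n}-S. \<sigma> i = i"
  shows "(\<Prod>i=0..<n. char_poly_matrix (signed_adj n A sg) $$ (i, \<sigma> i)) =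
     [:0,1:] ^ (n - card S) * [: \<Prod>i\<in>S. - complex_of_int (sg (i, \<sigma> i)) :]"
proof -
  have sn: "\<sigma> i < n" if "i < n" for i using perm that by (simp add: permutes_in_image)
  have fS: "finite S" using S finite_subset by blast
  have "(\<Prod>i=0..<n. char_poly_matrix (signed_adj n A sg) $$ (i, \<sigma> i)) =
     (\<Prod>i\<in>{0..<n}-S. char_poly_matrix (signed_adj n A sg) $$ (i, \<sigma> i)) *
     (\<Prod>i\<in>S. char_poly_matrix (signed_adj n A sg) $$ (i, \<sigma> i))"
    using prod.subset_diff[OF S] by simp
  also have "(\<Prod>i\<in>{0..<n}-S. char_poly_matrix (signed_adj n A sg) $$ (i, \<sigma> i)) =
      (\<Prod>i\<in>{0..<n}-S. [:0,1:])"
    by (rule prod.cong, simp, subst cpm_entry[OF sid], insert outS, auto)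
  also have "\<dots> = [:0,1:] ^ (n - card S)" using S fS by (simp add: card_Diff_subset)
  also have "(\<Prod>i\<in>S. char_poly_matrix (signed_adj n A sg) $$ (i, \<sigma> i)) =
      (\<Prod>i\<in>S. [: - complex_of_int (sg (i, \<sigma> i)) :])"
    by (rule prod.cong, simp, subst cpm_entry[OF sid], insert S inS sn, auto)
  also have "\<dots> = [: \<Prod>i\<in>S. - complex_of_int (sg (i, \<sigma> i)) :]" by (rule prod_to_poly)
  finally show ?thesis .
qed


lemma const_poly_pow: "[: c ^ k :] = [: c :] ^ k"
proof (induction k)
  case (Suc k) thus ?case by (simp add: Suc.IH[symmetric] mult.commute)
qed simp

lemma neg1_sq: "((-1::'a::comm_ring_1) ^ k) * ((-1) ^ k) = 1"
  by (metis power_mult_distrib mult_minus1 power_one minus_minus)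

lemma ring_id:
  fixes A B C e1 e2 c1 c2 :: "'a::comm_ring_1"
  assumes "e1 * e1 = 1" "e2 * e2 = 1"
  shows "A*B*C + e1*(A*C*(-e1*c1)) + e2*(A*B*(-e2*c2)) + e1*e2*(A*(-e1*c1*(-e2*c2))) = A*(B-c1)*(C-c2)"
proof -
  have "A*B*C + e1*(A*C*(-e1*c1)) + e2*(A*B*(-e2*c2)) + e1*e2*(A*(-e1*c1*(-e2*c2)))
     = A*B*C - (e1*e1)*(A*C*c1) - (e2*e2)*(A*B*c2) + (e1*e1)*(e2*e2)*(A*c1*c2)"
    by (simp add: algebra_simps)
  also have "\<dots> = A*(B-c1)*(C-c2)" unfolding assms by (simp add: algebra_simps)
  finally show ?thesis .
qed

lemma alg_identity:
  fixes s1 s2 :: complex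
  assumes "p \<ge> 1" "q \<ge> 1" "p + q \<le> n"
  shows "[:0,1:] ^ n
     + of_int ((-1) ^ (p - 1)) * ([:0,1:] ^ (n - p) * [: (-1) ^ p * s1 :])
     + of_int ((-1) ^ (q - 1)) * ([:0,1:] ^ (n - q) * [: (-1) ^ q * s2 :])
     + of_int ((-1) ^ (p - 1) * (-1) ^ (q - 1)) * ([:0,1:] ^ (n - (p + q)) * [: (-1) ^ p * s1 * ((-1) ^ q * s2) :])
   = [:0,1:] ^ (n - p - q) * ([:0,1:] ^ p - [:s1:]) * ([:0,1:] ^ q - [:s2:])"
proof -
  obtain p' where p: "p = Suc p'" using assms by (cases p) auto
  obtain q' where q: "q = Suc q'" using assms by (cases q) auto
  obtain m where n: "n = m + p + q" using assms by (intro that[of "n - p - q"]) simp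
  define X :: "complex poly" where "X = [:0,1:]"
  define e1 :: "complex poly" where "e1 = (-1) ^ p'"
  define e2 :: "complex poly" where "e2 = (-1) ^ q'"
  have E1: "e1 * e1 = 1" unfolding e1_def by (rule neg1_sq)
  have E2: "e2 * e2 = 1" unfolding e2_def by (rule neg1_sq)
  have oi: "(of_int ((-1) ^ k) :: complex poly) = (-1) ^ k" for k by simp
  have oi2: "(of_int ((-1) ^ k * (-1) ^ l) :: complex poly) = (-1) ^ k * (-1) ^ l" for k l by simp
  have n1: "n - p = m + q" and n2: "n - q = m + p" and n3: "n - (p+q) = m" and n4: "n - p - q = m" using n by auto
  have pm: "(-1::complex poly) ^ p = - e1" "(-1::complex poly) ^ q = - e2" "p - 1 = p'" "q - 1 = q'"
    unfolding e1_def e2_def p q by simp_all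
  have c2: "[: a * b :] = [:a:] * [:b:]" for a b :: complex by simp
  have m1: "[:-1::complex:] = -1" by (simp add: one_pCons)
  have c: "[: (-1) ^ k * s :] = (-1) ^ k * [: s :]" for k and s :: complex
    by (metis c2 const_poly_pow m1)
  have c3: "[: (-1) ^ p * s1 * ((-1) ^ q * s2) :] = ((-1) ^ p * [:s1:]) * ((-1) ^ q * [:s2:])"
    by (metis c c2)
  show ?thesis
    unfolding oi oi2 c3 c n1 n2 n3 n4 pm add_diff_cancel_right' X_def[symmetric] e1_def[symmetric] e2_def[symmetric]
  proof -
    have "X ^ n = X^m * X^p * X^q" "X ^ (m + q) = X^m * X^q" "X^(m+p) = X^m * X^p"
      by (simp_all add: power_add n)
    thus "X ^ n + e1 * (X ^ (m + q) * (- e1 * [:s1:])) + e2 * (X ^ (m + p) * (- e2 * [:s2:]))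
      + e1 * e2 * (X ^ m * (- e1 * [:s1:] * (- e2 * [:s2:])))
      = X ^ m * (X ^ p - [:s1:]) * (X ^ q - [:s2:])"
      by (simp only: ring_id[OF E1 E2])
  qed
qed


lemma cycle_of_list_ne:
  assumes "distinct ws" "length ws \<ge> 2" "x \<in> set ws"
  shows "cycle_of_list ws x \<noteq> x"
proof -
  obtain i where i: "i < length ws" "x = ws ! i" using assms(3) by (metis in_set_conv_nth)
  have m: "(i+1) mod length ws \<noteq> i"
  proof (cases "i+1 < length ws")
    case True thus ?thesis by simp
  next
    case False hence "i + 1 = length ws" using i by simp
    thus ?thesis using assms(2) by simp
  qed
  have "(i+1) mod length ws < length ws" using i(1) by (intro mod_less_divisor) auto
  hence "ws ! ((i+1) mod length ws) \<noteq> ws ! i" using nth_eq_iff_index_eq[OF assms(1)] i m by simp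
  thus ?thesis using cycle_of_list_nth[OF assms(1) i(1)] i(2) by simp
qed

lemma cycle_sign_prod:
  assumes "distinct ws"
  shows "(\<Prod>i\<in>set ws. complex_of_int (sg (i, cycle_of_list ws i))) = of_int (cycle_sign sg (cycle_arcs ws))"
proof -
  have "cycle_sign sg (cycle_arcs ws) = (\<Prod>a\<in>(\<lambda>x. (x, cycle_of_list ws x)) ` set ws. sg a)"
    unfolding cycle_sign_def cycle_arcs_cycle_of_list[OF assms] ..
  also have "\<dots> = (\<Prod>x\<in>set ws. sg (x, cycle_of_list ws x))"
    by (rule prod.reindex[unfolded comp_def]) (auto simp: inj_on_def)
  finally show ?thesis by simp
qed

lemma dcycle_sub:
  assumes "is_sidigraph n A sg" "is_dcycle_list A vs"
  shows "cycle_arcs vs \<subseteq> A" "set vs \<subseteq> {0..<n}" "distinct vs" "length vs \<ge> 2"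
proof -
  show s: "cycle_arcs vs \<subseteq> A" using assms(2) unfolding is_dcycle_list_def cycle_arcs_def by auto
  have "set vs = fst ` cycle_arcs vs" using fst_cycle_arcs by simp
  also have "\<dots> \<subseteq> fst ` A" using s by blast
  also have "\<dots> \<subseteq> {0..<n}" using assms(1) unfolding is_sidigraph_def by auto
  finally show "set vs \<subseteq> {0..<n}" .
  show "distinct vs" "length vs \<ge> 2" using assms(2) unfolding is_dcycle_list_def by auto
qed

lemma char_poly_two:
  assumes sid: "is_sidigraph n A sg" and d1: "is_dcycle_list A vs1" and d2: "is_dcycle_list A vs2"
    and dc: "dcycles A = {cycle_arcs vs1, cycle_arcs vs2}" and disj: "set vs1 \<inter> set vs2 = {}"
  shows "char_poly (signed_adj n A sg) =
     [:0,1:] ^ (n - length vs1 - length vs2)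
     * ([:0,1:] ^ length vs1 - [: of_int (cycle_sign sg (cycle_arcs vs1)) :])
     * ([:0,1:] ^ length vs2 - [: of_int (cycle_sign sg (cycle_arcs vs2)) :])"
proof -
  let ?f1 = "cycle_of_list vs1" and ?f2 = "cycle_of_list vs2"
  let ?M = "signed_adj n A sg"
  let ?CM = "char_poly_matrix ?M"
  define p where "p = length vs1"
  define q where "q = length vs2"
  define s1 where "s1 = complex_of_int (cycle_sign sg (cycle_arcs vs1))"
  define s2 where "s2 = complex_of_int (cycle_sign sg (cycle_arcs vs2))"
  define t where "t = (\<lambda>\<sigma>. signof \<sigma> * (\<Prod>i=0..<n. ?CM $$ (i, \<sigma> i)) :: complex poly)"
  note D1 = dcycle_sub[OF sid d1] and D2 = dcycle_sub[OF sid d2]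
  have c1: "card (set vs1) = p" unfolding p_def using D1(3) by (simp add: distinct_card)
  have c2: "card (set vs2) = q" unfolding q_def using D2(3) by (simp add: distinct_card)
  have "card (set vs1 \<union> set vs2) \<le> card {0..<n}" using D1 D2 by (intro card_mono) auto
  hence pq: "p + q \<le> n" using card_Un_disjoint[of "set vs1" "set vs2"] disj c1 c2 by simp
  have cU: "card (set vs1 \<union> set vs2) = p + q" using card_Un_disjoint[of "set vs1" "set vs2"] disj c1 c2 by simp
  have p1: "p \<ge> 1" "q \<ge> 1" using D1 D2 p_def q_def by auto
  have P1: "?f1 permutes {0..<n}" using cycle_permutes[of vs1] D1 permutes_subset by blast
  have P2: "?f2 permutes {0..<n}" using cycle_permutes[of vs2] D2 permutes_subset by blast
  have P12: "?f1 \<circ> ?f2 permutes {0..<n}" using permutes_compose[OF P2 P1] .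
  have a1: "(x, ?f1 x) \<in> A \<and> ?f1 x \<noteq> x" if "x \<in> set vs1" for x
    using cycle_arcs_cycle_of_list[OF D1(3)] D1(1) cycle_of_list_ne[OF D1(3) D1(4) that] that by auto
  have a2: "(x, ?f2 x) \<in> A \<and> ?f2 x \<noteq> x" if "x \<in> set vs2" for x
    using cycle_arcs_cycle_of_list[OF D2(3)] D2(1) cycle_of_list_ne[OF D2(3) D2(4) that] that by auto
  have o1: "?f1 x = x" if "x \<notin> set vs1" for x using id_outside_supp that by metis
  have o2: "?f2 x = x" if "x \<notin> set vs2" for x using id_outside_supp that by metis
  have i2: "?f2 x \<in> set vs2" if "x \<in> set vs2" for x
    using cycle_permutes[of vs2] that by (simp add: permutes_in_image)
  have e12a: "(?f1 \<circ> ?f2) x = ?f1 x" if "x \<in> set vs1" for x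
  proof -
    have "x \<notin> set vs2" using that disj by blast
    thus ?thesis using o2 by simp
  qed
  have e12b: "(?f1 \<circ> ?f2) x = ?f2 x" if "x \<in> set vs2" for x using that disj o1 i2 by auto
  have e12c: "(?f1 \<circ> ?f2) x = x" if "x \<notin> set vs1" "x \<notin> set vs2" for x using that o1 o2 by auto
  have Mc: "?M \<in> carrier_mat n n" unfolding signed_adj_def by simp
  have cp: "char_poly ?M = (\<Sum>\<sigma>\<in>{\<sigma>. \<sigma> permutes {0..<n}}. t \<sigma>)"
    unfolding char_poly_def t_def using det_def'[OF char_poly_matrix_closed[OF Mc]] by simp
  define T where "T = {id, ?f1, ?f2, ?f1 \<circ> ?f2}"
  have TP: "T \<subseteq> {\<sigma>. \<sigma> permutes {0..<n}}" unfolding T_def using P1 P2 P12 permutes_id by auto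
  have zero: "t \<sigma> = 0" if s: "\<sigma> \<in> {\<sigma>. \<sigma> permutes {0..<n}} - T" for \<sigma>
  proof -
    have perm: "\<sigma> permutes {0..<n}" using s by simp
    have "\<not> (\<forall>i. \<sigma> i \<noteq> i \<longrightarrow> (i, \<sigma> i) \<in> A)"
      using classify[OF d1 d2 dc disj perm] s unfolding T_def by blast
    then obtain i where i: "\<sigma> i \<noteq> i" "(i, \<sigma> i) \<notin> A" by blast
    have "i < n" using i(1) perm by (meson atLeastLessThan_iff permutes_not_in zero_le)
    moreover have "\<sigma> i < n" using perm \<open>i < n\<close> by (simp add: permutes_in_image)
    ultimately have "?CM $$ (i, \<sigma> i) = 0" using cpm_entry[OF sid] i by simp
    hence "(\<Prod>i=0..<n. ?CM $$ (i, \<sigma> i)) = 0" using \<open>i < n\<close> by (intro prod_zero) auto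
    thus ?thesis unfolding t_def by simp
  qed
  have sumT: "char_poly ?M = sum t T"
    unfolding cp by (rule sum.mono_neutral_right[OF finite_permutations[of "{0..<n}"] TP]) (auto intro: zero)
  obtain v1 where v1: "v1 \<in> set vs1" using D1 by (metis hd_in_set list.size(3) not_numeral_le_zero)
  obtain v2 where v2: "v2 \<in> set vs2" using D2 by (metis hd_in_set list.size(3) not_numeral_le_zero)
  have v1n2: "v1 \<notin> set vs2" and v2n1: "v2 \<notin> set vs1" using v1 v2 disj by auto
  have ne1: "id \<noteq> ?f1" using a1[OF v1] by (metis id_apply)
  have ne2: "id \<noteq> ?f2" using a2[OF v2] by (metis id_apply)
  have ne3: "id \<noteq> ?f1 \<circ> ?f2" using a1[OF v1] e12a[OF v1] by (metis id_apply)
  have ne4: "?f1 \<noteq> ?f2" using a1[OF v1] o2[OF v1n2] by metis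
  have ne5: "?f1 \<noteq> ?f1 \<circ> ?f2" using a2[OF v2] o1[OF v2n1] e12b[OF v2] by metis
  have ne6: "?f2 \<noteq> ?f1 \<circ> ?f2" using a1[OF v1] o2[OF v1n2] e12a[OF v1] by metis
  have sumT2: "sum t T = t id + t ?f1 + t ?f2 + t (?f1 \<circ> ?f2)"
    unfolding T_def using ne1 ne2 ne3 ne4 ne5 ne6 by (simp add: add.assoc)
  have tid: "t id = [:0,1:] ^ n"
  proof -
    have "(\<Prod>i=0..<n. ?CM $$ (i, id i)) = [:0,1:] ^ (n - card {}) * [: \<Prod>i\<in>{}. - complex_of_int (sg (i, id i)) :]"
      using prod_term[OF sid permutes_id[of "{0..<n}"], of "{}"] by simp
    thus ?thesis unfolding t_def by (simp add: sign_id one_pCons)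
  qed
  have tf1: "t ?f1 = of_int ((-1) ^ (p - 1)) * ([:0,1:] ^ (n - p) * [: (-1) ^ p * s1 :])"
  proof -
    have "(\<Prod>i=0..<n. ?CM $$ (i, ?f1 i)) = [:0,1:] ^ (n - card (set vs1)) * [: \<Prod>i\<in>set vs1. - complex_of_int (sg (i, ?f1 i)) :]"
      by (rule prod_term[OF sid P1 D1(2)]) (use a1 o1 in auto)
    also have "(\<Prod>i\<in>set vs1. - complex_of_int (sg (i, ?f1 i))) = (-1) ^ p * s1"
      unfolding prod_uminus c1 cycle_sign_prod[OF D1(3)] s1_def ..
    finally show ?thesis unfolding t_def sign_cycle_of_list[OF D1(3)] c1 p_def by simp
  qed
  have tf2: "t ?f2 = of_int ((-1) ^ (q - 1)) * ([:0,1:] ^ (n - q) * [: (-1) ^ q * s2 :])"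
  proof -
    have "(\<Prod>i=0..<n. ?CM $$ (i, ?f2 i)) = [:0,1:] ^ (n - card (set vs2)) * [: \<Prod>i\<in>set vs2. - complex_of_int (sg (i, ?f2 i)) :]"
      by (rule prod_term[OF sid P2 D2(2)]) (use a2 o2 in auto)
    also have "(\<Prod>i\<in>set vs2. - complex_of_int (sg (i, ?f2 i))) = (-1) ^ q * s2"
      unfolding prod_uminus c2 cycle_sign_prod[OF D2(3)] s2_def ..
    finally show ?thesis unfolding t_def sign_cycle_of_list[OF D2(3)] c2 q_def by simp
  qed
  have tf12: "t (?f1 \<circ> ?f2) = of_int ((-1) ^ (p - 1) * (-1) ^ (q - 1)) *
      ([:0,1:] ^ (n - (p + q)) * [: (-1) ^ p * s1 * ((-1) ^ q * s2) :])"
  proof -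
    let ?S = "set vs1 \<union> set vs2"
    have "(\<Prod>i=0..<n. ?CM $$ (i, (?f1 \<circ> ?f2) i)) = [:0,1:] ^ (n - card ?S) * [: \<Prod>i\<in>?S. - complex_of_int (sg (i, (?f1 \<circ> ?f2) i)) :]"
      by (rule prod_term[OF sid P12]) (use D1 D2 a1 a2 e12a e12b e12c in auto)
    also have "(\<Prod>i\<in>?S. - complex_of_int (sg (i, (?f1 \<circ> ?f2) i)))
       = (\<Prod>i\<in>set vs1. - complex_of_int (sg (i, (?f1 \<circ> ?f2) i))) * (\<Prod>i\<in>set vs2. - complex_of_int (sg (i, (?f1 \<circ> ?f2) i)))"
      by (rule prod.union_disjoint) (use disj in auto)
    also have "(\<Prod>i\<in>set vs1. - complex_of_int (sg (i, (?f1 \<circ> ?f2) i))) = (\<Prod>i\<in>set vs1. - complex_of_int (sg (i, ?f1 i)))"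
      by (rule prod.cong) (use e12a in auto)
    also have "\<dots> = (-1) ^ p * s1"
      unfolding prod_uminus c1 cycle_sign_prod[OF D1(3)] s1_def ..
    also have "(\<Prod>i\<in>set vs2. - complex_of_int (sg (i, (?f1 \<circ> ?f2) i))) = (\<Prod>i\<in>set vs2. - complex_of_int (sg (i, ?f2 i)))"
      by (rule prod.cong) (use e12b in auto)
    also have "\<dots> = (-1) ^ q * s2"
      unfolding prod_uminus c2 cycle_sign_prod[OF D2(3)] s2_def ..
    finally have pr: "(\<Prod>i=0..<n. ?CM $$ (i, (?f1 \<circ> ?f2) i)) = [:0,1:] ^ (n - (p + q)) * [: (-1) ^ p * s1 * ((-1) ^ q * s2) :]"
      unfolding cU .
    have "sign (?f1 \<circ> ?f2) = sign ?f1 * sign ?f2" by (simp add: sign_compose permutation_of_cycle)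
    thus ?thesis unfolding t_def pr sign_cycle_of_list[OF D1(3)] sign_cycle_of_list[OF D2(3)] p_def q_def
      by simp
  qed
  show ?thesis
    unfolding sumT sumT2 tid tf1 tf2 tf12 alg_identity[OF p1 pq]
    unfolding p_def q_def s1_def s2_def ..
qed


definition En :: "complex poly \<Rightarrow> real" where
  "En f = (\<Sum>z\<in>{z. poly f z = 0}. real (order z f) * \<bar>Re z\<bar>)"

lemma energy_En: "energy n A sg = En (char_poly (signed_adj n A sg))"
  unfolding energy_def En_def Let_def ..

lemma En_restrict:
  assumes "f \<noteq> 0" "finite R" "{z. poly f z = 0} \<subseteq> R"
  shows "(\<Sum>z\<in>R. real (order z f) * \<bar>Re z\<bar>) = En f"
  unfolding En_def
  by (rule sum.mono_neutral_right[symmetric, symmetric]) (use assms order_root in auto)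

lemma En_mult:
  assumes f: "f \<noteq> 0" and g: "g \<noteq> 0"
  shows "En (f * g) = En f + En g"
proof -
  have fg: "f * g \<noteq> 0" using f g by simp
  let ?R = "{z. poly (f * g) z = 0}"
  have fin: "finite ?R" using poly_roots_finite[OF fg] .
  have "En (f * g) = (\<Sum>z\<in>?R. real (order z f) * \<bar>Re z\<bar> + real (order z g) * \<bar>Re z\<bar>)"
    unfolding En_def order_mult[OF fg] by (simp add: algebra_simps)
  also have "\<dots> = (\<Sum>z\<in>?R. real (order z f) * \<bar>Re z\<bar>) + (\<Sum>z\<in>?R. real (order z g) * \<bar>Re z\<bar>)"
    by (rule sum.distrib)
  also have "(\<Sum>z\<in>?R. real (order z f) * \<bar>Re z\<bar>) = En f"
    by (rule En_restrict[OF f fin]) auto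
  also have "(\<Sum>z\<in>?R. real (order z g) * \<bar>Re z\<bar>) = En g"
    by (rule En_restrict[OF g fin]) auto
  finally show ?thesis .
qed

lemma En_X_pow: "En ([:0,1:] ^ m) = 0"
  unfolding En_def by (rule sum.neutral) (auto simp: poly_power)

lemma poly_Xk: "poly ([:0,1:] ^ k - [:s:]) (z::complex) = z ^ k - s"
  by (simp add: poly_monom[symmetric] monom_altdef[symmetric])

lemma Xk_nz: assumes "s \<noteq> 0" "k \<ge> 1" shows "([:0,1:] ^ k - [:s:] :: complex poly) \<noteq> 0"
proof
  assume "[:0,1:] ^ k - [:s:] = 0"
  hence "poly ([:0,1:] ^ k - [:s:]) 1 = 0" "poly ([:0,1:] ^ k - [:s:]) (0::complex) = 0" by simp_all
  thus False using assms by (cases k) (auto simp: poly_Xk)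
qed

lemma En_Xk:
  assumes k: "k \<ge> 1" and s: "s \<noteq> 0"
  shows "En ([:0,1:] ^ k - [:s:]) = (\<Sum>z\<in>{z. z ^ k = s}. \<bar>Re z\<bar>)"
proof -
  let ?f = "[:0,1:] ^ k - [:s:] :: complex poly"
  have nz: "?f \<noteq> 0" using Xk_nz[OF s k] .
  have pd: "poly (pderiv ?f) z = of_nat k * z ^ (k - 1)" for z
    by (simp add: pderiv_power pderiv_diff poly_power pderiv_pCons)
  have rs: "rsquarefree ?f"
    unfolding rsquarefree_roots
  proof (intro allI notI)
    fix z assume "poly ?f z = 0 \<and> poly (pderiv ?f) z = 0"
    hence "z ^ k = s" "of_nat k * z ^ (k-1) = 0" using pd poly_Xk by auto
    thus False using k s by (cases "z = 0") (auto simp: power_0_left)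
  qed
  have "En ?f = (\<Sum>z\<in>{z. poly ?f z = 0}. \<bar>Re z\<bar>)"
    unfolding En_def by (rule sum.cong) (use rsquarefree_root_order[OF rs _ nz] in auto)
  also have "{z. poly ?f z = 0} = {z. z ^ k = s}" by (simp add: poly_Xk)
  finally show ?thesis .
qed

lemma roots_sum_1:
  assumes k: "k \<ge> 1"
  shows "(\<Sum>z\<in>{z::complex. z ^ k = 1}. \<bar>Re z\<bar>) = (\<Sum>j<k. \<bar>cos (2 * pi * real j / real k)\<bar>)"
proof -
  have "(\<Sum>j<k. \<bar>Re (cis (2 * pi * real j / real k))\<bar>) = (\<Sum>z\<in>{z::complex. z ^ k = 1}. \<bar>Re z\<bar>)"
    using k by (intro sum.reindex_bij_betw Complex.bij_betw_roots_unity) auto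
  thus ?thesis by (simp only: cis.sel(1))
qed

lemma roots_sum_m1:
  assumes "odd k"
  shows "(\<Sum>z\<in>{z::complex. z ^ k = -1}. \<bar>Re z\<bar>) = (\<Sum>z\<in>{z::complex. z ^ k = 1}. \<bar>Re z\<bar>)"
proof -
  have b: "bij_betw uminus {z::complex. z ^ k = 1} {z. z ^ k = -1}"
    by (rule bij_betw_byWitness[where f' = uminus]) (use assms in auto)
  have "(\<Sum>z\<in>{z::complex. z ^ k = 1}. \<bar>Re (- z)\<bar>) = (\<Sum>z\<in>{z::complex. z ^ k = -1}. \<bar>Re z\<bar>)"
    by (rule sum.reindex_bij_betw[OF b])
  thus ?thesis by simp
qed


lemma abs_cos_shift: "\<bar>cos (x + real m * pi)\<bar> = \<bar>cos x\<bar>"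
proof (induction m)
  case (Suc m)
  have "cos (x + real (Suc m) * pi) = cos ((x + real m * pi) + pi)" by (simp add: algebra_simps)
  also have "\<dots> = - cos (x + real m * pi)" by (rule cos_periodic_pi)
  finally show ?case using Suc by simp
qed simp

lemma double_mod_bij:
  fixes k :: nat
  assumes "odd k"
  shows "bij_betw (\<lambda>j. (2 * j) mod k) {..<k} {..<k}"
proof (rule bij_betw_byWitness[where f' = "\<lambda>j. if even j then j div 2 else (j + k) div 2"])
  have kpos: "k > 0" using assms by (cases k) simp_all
  show "\<forall>a\<in>{..<k}. (if even ((2 * a) mod k) then (2 * a) mod k div 2 else ((2 * a) mod k + k) div 2) = a"
  proof
    fix a assume a: "a \<in> {..<k}"
    show "(if even ((2 * a) mod k) then (2 * a) mod k div 2 else ((2 * a) mod k + k) div 2) = a"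
    proof (cases "2 * a < k")
      case True thus ?thesis by simp
    next
      case False
      hence m: "(2 * a) mod k = 2 * a - k" using a by (simp add: le_mod_geq)
      have "odd (2 * a - k)" using False assms by simp
      thus ?thesis unfolding m using False by simp
    qed
  qed
  show "\<forall>a'\<in>{..<k}. 2 * (if even a' then a' div 2 else (a' + k) div 2) mod k = a'"
  proof
    fix j assume j: "j \<in> {..<k}"
    show "2 * (if even j then j div 2 else (j + k) div 2) mod k = j"
    proof (cases "even j")
      case True thus ?thesis using j by simp
    next
      case False
      hence "even (j + k)" using assms by simp
      hence "2 * ((j + k) div 2) = j + k" by simp
      thus ?thesis using False j by simp
    qed
  qed
  show "(\<lambda>j. 2 * j mod k) ` {..<k} \<subseteq> {..<k}" using kpos by auto
  show "(\<lambda>j. if even j then j div 2 else (j + k) div 2) ` {..<k} \<subseteq> {..<k}" by auto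
qed

lemma sum_abs_cos_double:
  assumes "odd k"
  shows "(\<Sum>j<k. \<bar>cos (2 * pi * real j / real k)\<bar>) = (\<Sum>i<k. \<bar>cos (pi * real i / real k)\<bar>)"
proof -
  have kpos: "k > 0" using assms by (cases k) simp_all
  have eq: "\<bar>cos (2 * pi * real j / real k)\<bar> = \<bar>cos (pi * real ((2 * j) mod k) / real k)\<bar>" for j
  proof -
    have d: "real (2 * j) = real ((2 * j) mod k) + real k * real ((2 * j) div k)"
      by (metis mod_div_mult_eq of_nat_add of_nat_mult mult.commute)
    have "2 * pi * real j / real k = pi * real ((2 * j) mod k) / real k + real ((2 * j) div k) * pi"
      using kpos d by (simp add: field_simps)
    thus ?thesis by (simp add: abs_cos_shift)
  qed
  have "(\<Sum>j<k. \<bar>cos (2 * pi * real j / real k)\<bar>) = (\<Sum>j<k. \<bar>cos (pi * real ((2 * j) mod k) / real k)\<bar>)"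
    using eq by simp
  also have "\<dots> = (\<Sum>i<k. \<bar>cos (pi * real i / real k)\<bar>)"
    by (rule sum.reindex_bij_betw[OF double_mod_bij[OF assms], where g = "\<lambda>i. \<bar>cos (pi * real i / real k)\<bar>"])
  finally show ?thesis .
qed

lemma dirichlet:
  "sin (t / 2) * (1 + 2 * (\<Sum>i\<in>{1..m}. cos (real i * t))) = sin ((2 * real m + 1) * t / 2)"
proof (induction m)
  case 0 thus ?case by simp
next
  case (Suc m)
  let ?a = "real (Suc m) * t" and ?b = "t / 2"
  have "(\<Sum>i\<in>{1..Suc m}. cos (real i * t)) = (\<Sum>i\<in>{1..m}. cos (real i * t)) + cos ?a"
    by simp
  hence "sin (t / 2) * (1 + 2 * (\<Sum>i\<in>{1..Suc m}. cos (real i * t)))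
     = sin ((2 * real m + 1) * t / 2) + 2 * cos ?a * sin ?b"
    using Suc by (simp add: algebra_simps)
  also have "2 * cos ?a * sin ?b = sin (?a + ?b) - sin (?a - ?b)"
    by (simp add: sin_add sin_diff)
  also have "?a - ?b = (2 * real m + 1) * t / 2" by (simp add: field_simps)
  also have "?a + ?b = (2 * real (Suc m) + 1) * t / 2" by (simp add: field_simps)
  finally show ?case by simp
qed

lemma sum_abs_cos_half:
  assumes k: "k = 2 * m + 1"
  shows "(\<Sum>i<k. \<bar>cos (pi * real i / real k)\<bar>) = 1 + 2 * (\<Sum>i\<in>{1..m}. cos (real i * (pi / real k)))"
proof -
  have kpos: "real k > 0" using k by simp
  have pos: "cos (pi * real i / real k) \<ge> 0" if "i \<le> m" for i
  proof (rule cos_ge_zero)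
    have "real i * 2 \<le> real k" using that k by simp
    hence "pi * real i / real k \<le> pi / 2" using kpos by (simp add: field_simps)
    thus "pi * real i / real k \<le> pi / 2" .
    show "- (pi / 2) \<le> pi * real i / real k" using kpos
      by (metis divide_nonneg_pos le_minus_iff mult_nonneg_nonneg neg_le_0_iff_le of_nat_0_le_iff pi_ge_zero order_trans pi_half_ge_zero)
  qed
  have split: "{..<k} = insert 0 ({1..m} \<union> {m+1..2*m})" using k by auto
  have "(\<Sum>i<k. \<bar>cos (pi * real i / real k)\<bar>) = 1 + ((\<Sum>i\<in>{1..m}. \<bar>cos (pi * real i / real k)\<bar>) + (\<Sum>i\<in>{m+1..2*m}. \<bar>cos (pi * real i / real k)\<bar>))"
    unfolding split by (subst sum.insert) (auto simp: sum.union_disjoint)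
  also have "(\<Sum>i\<in>{m+1..2*m}. \<bar>cos (pi * real i / real k)\<bar>) = (\<Sum>i\<in>{1..m}. \<bar>cos (pi * real (k - i) / real k)\<bar>)"
    by (rule sum.reindex_bij_witness[where i = "\<lambda>i. k - i" and j = "\<lambda>i. k - i"]) (use k in auto)
  also have "\<dots> = (\<Sum>i\<in>{1..m}. \<bar>cos (pi * real i / real k)\<bar>)"
  proof (rule sum.cong)
    fix i assume i: "i \<in> {1..m}"
    have "pi * real (k - i) / real k = pi - pi * real i / real k" using i k kpos by (simp add: field_simps of_nat_diff)
    thus "\<bar>cos (pi * real (k - i) / real k)\<bar> = \<bar>cos (pi * real i / real k)\<bar>" by simp
  qed simp
  also have "(\<Sum>i\<in>{1..m}. \<bar>cos (pi * real i / real k)\<bar>) = (\<Sum>i\<in>{1..m}. cos (real i * (pi / real k)))"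
    by (rule sum.cong) (use pos in \<open>auto simp: mult.commute\<close>)
  finally show ?thesis by simp
qed

lemma sum_abs_cos_roots:
  assumes "odd k"
  shows "(\<Sum>j<k. \<bar>cos (2 * pi * real j / real k)\<bar>) = 1 / sin (pi / (2 * real k))"
proof -
  obtain m where k: "k = 2 * m + 1" using assms by (metis oddE)
  have kpos: "real k > 0" using k by simp
  have sp: "sin (pi / (2 * real k)) > 0"
    by (rule sin_gt_zero) (use kpos in \<open>auto simp: field_simps\<close>)
  have D: "sin (pi / real k / 2) * (1 + 2 * (\<Sum>i\<in>{1..m}. cos (real i * (pi / real k)))) = 1"
  proof -
    have "(2 * real m + 1) * (pi / real k) / 2 = pi / 2" using k by (simp add: field_simps)
    thus ?thesis using dirichlet[of "pi / real k" m] by simp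
  qed
  have "pi / real k / 2 = pi / (2 * real k)" by simp
  hence "1 + 2 * (\<Sum>i\<in>{1..m}. cos (real i * (pi / real k))) = 1 / sin (pi / (2 * real k))"
    using D sp by (simp add: field_simps)
  thus ?thesis using sum_abs_cos_double[OF assms] sum_abs_cos_half[OF k] by simp
qed


definition Fc :: "real \<Rightarrow> real" where "Fc x = 1 / sin (pi / (2 * x))"

definition hh :: "real \<Rightarrow> real" where "hh u = u^2 * cos u / (sin u)^2"

lemma sin_pos_half: assumes "0 < u" "u \<le> pi / 2" shows "sin u > 0"
  using assms by (intro sin_gt_zero) (auto simp: pi_gt_zero)

lemma hh_deriv:
  assumes "0 < u" "u \<le> pi / 2"
  shows "(hh has_real_derivative (u * (2 * sin u * cos u - u * (sin u)^2 - 2 * u * (cos u)^2) / (sin u)^3)) (at u)"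
proof -
  have s: "sin u \<noteq> 0" using sin_pos_half[OF assms] by simp
  have "((\<lambda>u. u^2 * cos u / (sin u)^2) has_real_derivative
     ((2 * u * cos u - u^2 * sin u) * (sin u)^2 - u^2 * cos u * (2 * sin u * cos u)) / ((sin u)^2)^2) (at u)"
    using s by (auto intro!: derivative_eq_intros simp: power2_eq_square)
  moreover have "((2 * u * cos u - u^2 * sin u) * (sin u)^2 - u^2 * cos u * (2 * sin u * cos u)) / ((sin u)^2)^2
     = u * (2 * sin u * cos u - u * (sin u)^2 - 2 * u * (cos u)^2) / (sin u)^3"
    using s by (simp add: field_simps power2_eq_square power3_eq_cube)
  ultimately show ?thesis unfolding hh_def[abs_def] by simp
qed

lemma hh_deriv_nonpos:
  assumes "0 < u" "u \<le> pi / 2"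
  shows "u * (2 * sin u * cos u - u * (sin u)^2 - 2 * u * (cos u)^2) / (sin u)^3 \<le> 0"
proof -
  have s: "sin u > 0" using sin_pos_half[OF assms] .
  have c: "cos u \<ge> 0" using assms by (intro cos_ge_zero) auto
  have sl: "sin u \<le> u" by (rule sin_x_le_x) (use assms in simp)
  have "2 * sin u * cos u \<le> 2 * u * cos u" using sl c by (simp add: mult_right_mono)
  also have "2 * u * cos u \<le> u * (1 + (cos u)^2)"
  proof -
    have "0 \<le> u * (1 - cos u)^2" using assms by simp
    thus ?thesis by (simp add: power2_eq_square algebra_simps)
  qed
  also have "u * (1 + (cos u)^2) = u * (sin u)^2 + 2 * u * (cos u)^2"
    by (subst sin_cos_squared_add[symmetric, of u]) (simp only: algebra_simps mult_2)
  finally have "2 * sin u * cos u - u * (sin u)^2 - 2 * u * (cos u)^2 \<le> 0" by simp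
  hence "u * (2 * sin u * cos u - u * (sin u)^2 - 2 * u * (cos u)^2) \<le> 0"
    using assms by (simp add: mult_nonneg_nonpos)
  thus ?thesis using s by (simp add: divide_nonpos_pos)
qed

lemma hh_antimono:
  assumes "0 < a" "a \<le> b" "b \<le> pi / 2"
  shows "hh b \<le> hh a"
  by (rule DERIV_nonpos_imp_nonincreasing[OF assms(2)])
     (use assms hh_deriv hh_deriv_nonpos in \<open>meson order.trans less_le_trans\<close>)

lemma Fc_deriv:
  assumes "x \<ge> 1"
  shows "(Fc has_real_derivative hh (pi / (2 * x)) * (2 / pi)) (at x)"
proof -
  let ?u = "pi / (2 * x)"
  have up: "0 < ?u" "?u \<le> pi / 2" using assms by (auto simp: field_simps)
  have s: "sin ?u \<noteq> 0" using sin_pos_half[OF up] by simp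
  have x0: "x \<noteq> 0" using assms by simp
  have "((\<lambda>x. 1 / sin (pi / (2 * x))) has_real_derivative
      - (cos ?u * (- (pi * 2) / (2 * x)^2)) / (sin ?u)^2) (at x)"
    using s x0 by (auto intro!: derivative_eq_intros simp: power2_eq_square)
  moreover have "- (cos ?u * (- (pi * 2) / (2 * x)^2)) / (sin ?u)^2 = hh ?u * (2 / pi)"
    unfolding hh_def using s x0 pi_gt_zero by (simp add: field_simps power2_eq_square)
  ultimately show ?thesis unfolding Fc_def[abs_def] by simp
qed

lemma Fc_convex: "convex_on {1..} Fc"
proof (rule convex_on_realI[where f' = "\<lambda>x. hh (pi / (2 * x)) * (2 / pi)"])
  show "connected {1::real..}" by simp
  show "\<And>x. x \<in> {1..} \<Longrightarrow> (Fc has_real_derivative hh (pi / (2 * x)) * (2 / pi)) (at x)"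
    using Fc_deriv by simp
  fix x y :: real assume x: "x \<in> {1..}" and y: "y \<in> {1..}" and xy: "x \<le> y"
  have "hh (pi / (2 * x)) \<le> hh (pi / (2 * y))"
    by (rule hh_antimono) (use x y xy in \<open>auto simp: field_simps\<close>)
  thus "hh (pi / (2 * x)) * (2 / pi) \<le> hh (pi / (2 * y)) * (2 / pi)"
    by (rule mult_right_mono) (use pi_gt_zero in auto)
qed

lemma Fc_mono:
  assumes "1 \<le> x" "x \<le> y" shows "Fc x \<le> Fc y"
proof -
  have a: "0 < pi / (2 * y)" "pi / (2 * y) \<le> pi / (2 * x)" "pi / (2 * x) \<le> pi / 2"
    using assms by (auto simp: field_simps)
  have "sin (pi / (2 * y)) \<le> sin (pi / (2 * x))"
    using a by (intro sin_monotone_2pi_le) auto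
  moreover have "sin (pi / (2 * y)) > 0" using a by (intro sin_pos_half) auto
  ultimately show ?thesis unfolding Fc_def by (simp add: frac_le)
qed

lemma Fc_3: "Fc 3 = 2"
  unfolding Fc_def by (simp add: sin_30)

lemma Fc_ge2: assumes "3 \<le> x" shows "Fc x \<ge> 2"
  using Fc_mono[of 3 x] assms Fc_3 by simp

lemma Fc_pair:
  assumes "3 \<le> p" "p \<le> N - 3"
  shows "Fc p + Fc (N - p) \<le> Fc 3 + Fc (N - 3)"
proof (cases "N = 6")
  case True thus ?thesis using assms by simp
next
  case False
  hence N: "N > 6" using assms by simp
  define t where "t = (p - 3) / (N - 6)"
  have t: "0 \<le> t" "t \<le> 1" unfolding t_def using assms N by (auto simp: field_simps)
  have in1: "(3::real) \<in> {1..}" "N - 3 \<in> {1..}" using N by auto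
  have tN: "t * N = p - 3 + 6 * t" unfolding t_def using N by (simp add: field_simps)
  have "(1 - t) *\<^sub>R 3 + t *\<^sub>R (N - 3) = 3 - 6 * t + t * N" by (simp add: algebra_simps)
  hence e1: "(1 - t) *\<^sub>R 3 + t *\<^sub>R (N - 3) = p" using tN by linarith
  have "(1 - t) *\<^sub>R (N - 3) + t *\<^sub>R 3 = N - 3 + 6 * t - t * N" by (simp add: algebra_simps)
  hence e2: "(1 - t) *\<^sub>R (N - 3) + t *\<^sub>R 3 = N - p" using tN by linarith
  have "Fc p \<le> (1 - t) * Fc 3 + t * Fc (N - 3)"
    using convex_onD[OF Fc_convex t in1(1) in1(2)] unfolding e1 .
  moreover have "Fc (N - p) \<le> (1 - t) * Fc (N - 3) + t * Fc 3"
    using convex_onD[OF Fc_convex t in1(2) in1(1)] unfolding e2 .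
  ultimately show ?thesis by (simp add: algebra_simps)
qed


lemma prod_pm1:
  assumes "finite C" "\<forall>a\<in>C. f a = (1::int) \<or> f a = -1"
  shows "prod f C = 1 \<or> prod f C = -1"
  using assms by (induction C rule: finite_induct) auto

lemma En_cyc:
  assumes k: "odd k" and s: "s = 1 \<or> s = -1"
  shows "En ([:0,1:] ^ k - [:s:]) = Fc (real k)"
proof -
  have k1: "k \<ge> 1" using k by (cases k) auto
  have s0: "s \<noteq> 0" using s by auto
  have "(\<Sum>z\<in>{z. z ^ k = s}. \<bar>Re z\<bar>) = (\<Sum>z\<in>{z::complex. z ^ k = 1}. \<bar>Re z\<bar>)"
    using s roots_sum_m1[OF k] by auto
  also have "\<dots> = 1 / sin (pi / (2 * real k))" using roots_sum_1[OF k1] sum_abs_cos_roots[OF k] by simp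
  finally show ?thesis unfolding En_Xk[OF k1 s0] Fc_def .
qed

lemma in_Dns_two:
  assumes "in_Dns n A sg"
  obtains C1 C2 where "dcycles A = {C1, C2}" "C1 \<noteq> C2"
  using assms unfolding in_Dns_def by (metis card_2_iff)

lemma energy_two:
  assumes D: "in_Dns n A sg" and dc: "dcycles A = {C1, C2}" and ne: "C1 \<noteq> C2"
    and o1: "odd (cycle_length C1)" and o2: "odd (cycle_length C2)"
  shows "energy n A sg = Fc (real (cycle_length C1)) + Fc (real (cycle_length C2))"
    "cycle_length C1 + cycle_length C2 \<le> n" "cycle_length C1 \<ge> 2" "cycle_length C2 \<ge> 2"
proof -
  have sid: "is_sidigraph n A sg" using D unfolding in_Dns_def by simp
  have "C1 \<in> dcycles A" "C2 \<in> dcycles A" using dc by auto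
  then obtain vs1 vs2 where v1: "is_dcycle_list A vs1" "C1 = cycle_arcs vs1"
    and v2: "is_dcycle_list A vs2" "C2 = cycle_arcs vs2"
    unfolding dcycles_def by blast
  have "cycle_vertices C1 \<inter> cycle_vertices C2 = {}"
    using D ne dc unfolding in_Dns_def by auto
  hence disj: "set vs1 \<inter> set vs2 = {}" unfolding cycle_vertices_def v1 v2 fst_cycle_arcs .
  note D1 = dcycle_sub[OF sid v1(1)] and D2 = dcycle_sub[OF sid v2(1)]
  have l1: "cycle_length C1 = length vs1" unfolding cycle_length_def v1 using card_cycle_arcs[OF D1(3)] .
  have l2: "cycle_length C2 = length vs2" unfolding cycle_length_def v2 using card_cycle_arcs[OF D2(3)] .
  show "cycle_length C1 \<ge> 2" "cycle_length C2 \<ge> 2" using l1 l2 D1 D2 by auto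
  have "card (set vs1 \<union> set vs2) \<le> card {0..<n}" using D1 D2 by (intro card_mono) auto
  thus "cycle_length C1 + cycle_length C2 \<le> n"
    using card_Un_disjoint[of "set vs1" "set vs2"] disj l1 l2 D1 D2 by (simp add: distinct_card)
  have sgn: "cycle_sign sg (cycle_arcs vs) = 1 \<or> cycle_sign sg (cycle_arcs vs) = -1"
    if "cycle_arcs vs \<subseteq> A" for vs
    unfolding cycle_sign_def using that sid finite_cycle_arcs unfolding is_sidigraph_def
    by (intro prod_pm1) auto
  let ?s1 = "complex_of_int (cycle_sign sg (cycle_arcs vs1))"
  let ?s2 = "complex_of_int (cycle_sign sg (cycle_arcs vs2))"
  have s1: "?s1 = 1 \<or> ?s1 = -1" using sgn[OF D1(1)] by auto
  have s2: "?s2 = 1 \<or> ?s2 = -1" using sgn[OF D2(1)] by auto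
  have nz1: "[:0,1:] ^ length vs1 - [:?s1:] \<noteq> 0" using Xk_nz s1 D1 by auto
  have nz2: "[:0,1:] ^ length vs2 - [:?s2:] \<noteq> 0" using Xk_nz s2 D2 by auto
  have nz0: "([:0,1:] :: complex poly) ^ (n - length vs1 - length vs2) \<noteq> 0" by simp
  have "energy n A sg = En ([:0,1:] ^ (n - length vs1 - length vs2) * ([:0,1:] ^ length vs1 - [:?s1:]) * ([:0,1:] ^ length vs2 - [:?s2:]))"
  proof -
    have dc': "dcycles A = {cycle_arcs vs1, cycle_arcs vs2}" using dc v1 v2 by simp
    show ?thesis unfolding energy_En char_poly_two[OF sid v1(1) v2(1) dc' disj] ..
  qed
  also have "\<dots> = En ([:0,1:] ^ length vs1 - [:?s1:]) + En ([:0,1:] ^ length vs2 - [:?s2:])"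
    using nz0 nz1 nz2 by (simp add: En_mult En_X_pow)
  also have "\<dots> = Fc (real (cycle_length C1)) + Fc (real (cycle_length C2))"
    using En_cyc[OF _ s1] En_cyc[OF _ s2] o1 o2 l1 l2 by simp
  finally show "energy n A sg = Fc (real (cycle_length C1)) + Fc (real (cycle_length C2))" .
qed


definition arcsB :: "nat \<Rightarrow> nat \<Rightarrow> (nat \<times> nat) set" where
  "arcsB n Q = {(0,1),(1,2),(2,0)} \<union> (\<lambda>i. (3+i, 3 + (i+1) mod Q)) ` {..<Q} \<union> {(0,v) | v. v = 3 \<or> (3+Q \<le> v \<and> v < n)}"

lemma dcycle_iff: "is_dcycle_list A ws \<longleftrightarrow> distinct ws \<and> length ws \<ge> 2 \<and> cycle_arcs ws \<subseteq> A"
  unfolding is_dcycle_list_def cycle_arcs_def by auto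

lemma cyc1: "cycle_arcs [0,1,2] = {(0,1),(1,2),(2,0::nat)}"
proof -
  have "{..<length [0,1,2::nat]} = {0,1,2}" by auto
  thus ?thesis unfolding cycle_arcs_image by simp
qed

lemma cyc2: assumes "Q > 0" shows "cycle_arcs [3..<3+Q] = (\<lambda>i. (3+i, 3 + (i+1) mod Q)) ` {..<Q}"
  unfolding cycle_arcs_image using assms by (intro image_cong) (auto simp: nth_upt)

lemma mod_succ_ne: fixes i Q :: nat assumes "i < Q" "Q \<ge> 2" shows "(i+1) mod Q \<noteq> i"
proof (cases "i+1 < Q")
  case True thus ?thesis by simp
next
  case False hence "i + 1 = Q" using assms by simp
  thus ?thesis using assms by simp
qed

lemma mod_succ_ne': fixes i Q :: nat assumes "i < Q" "Q \<ge> 2" shows "i \<noteq> Suc i mod Q"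
  using mod_succ_ne[OF assms] by simp

lemma all_from_one:
  assumes vs: "vs \<noteq> []" and step: "\<And>i. i < length vs \<Longrightarrow> P (vs ! i) \<Longrightarrow> P (vs ! ((i+1) mod length vs))"
    and i0: "i0 < length vs" "P (vs ! i0)"
  shows "\<forall>j<length vs. P (vs ! j)"
proof -
  let ?L = "length vs"
  have L: "?L > 0" using vs by simp
  have d: "P (vs ! ((i0 + d) mod ?L))" for d
  proof (induction d)
    case 0 thus ?case using i0 by simp
  next
    case (Suc d)
    have "P (vs ! (((i0 + d) mod ?L + 1) mod ?L))" using step[OF _ Suc] L by simp
    thus ?case by (simp add: mod_Suc_eq)
  qed
  show ?thesis
  proof (intro allI impI)
    fix j assume j: "j < ?L"
    have "(i0 + (j + ?L - i0)) mod ?L = j" using i0 j by simp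
    thus "P (vs ! j)" using d[of "j + ?L - i0"] by simp
  qed
qed

lemma construction:
  assumes Q: "Q \<ge> 2" and n: "3 + Q \<le> n"
  shows "is_Dnspq n 3 Q (arcsB n Q) (\<lambda>_. 1)"
proof -
  let ?A = "arcsB n Q"
  let ?w1 = "[0,1,2::nat]" and ?w2 = "[3..<3+Q]"
  define C1 where "C1 = {(0::nat,1::nat),(1,2),(2,0)}"
  define C2 where "C2 = (\<lambda>i. (3+i, 3 + (i+1) mod Q)) ` {..<Q}"
  have Q0: "Q > 0" using Q by simp
  have c1: "cycle_arcs ?w1 = C1" unfolding C1_def by (rule cyc1)
  have c2: "cycle_arcs ?w2 = C2" unfolding C2_def by (rule cyc2[OF Q0])
  have AU: "?A = C1 \<union> C2 \<union> {(0,v) | v. v = 3 \<or> (3+Q \<le> v \<and> v < n)}"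
    unfolding arcsB_def C1_def C2_def ..
  have d1: "is_dcycle_list ?A ?w1" unfolding dcycle_iff c1 AU by auto
  have d2: "is_dcycle_list ?A ?w2" unfolding dcycle_iff c2 AU using Q by auto
  have src: "x < 3 + Q" if "(x,y) \<in> ?A" for x y
    using that unfolding AU C1_def C2_def by auto
  have Wcl: "(x,y) \<in> C2 \<and> 3 \<le> y" if "(x,y) \<in> ?A" "3 \<le> x" for x y
    using that unfolding AU C1_def C2_def by auto
  have Tcl: "(x,y) \<in> C1" if "(x,y) \<in> ?A" "x < 3" "y < 3" for x y
    using that unfolding AU C1_def C2_def by auto
  have dcyc: "dcycles ?A = {C1, C2}"
  proof
    show "{C1, C2} \<subseteq> dcycles ?A" unfolding dcycles_def using d1 d2 c1 c2 by blast
    show "dcycles ?A \<subseteq> {C1, C2}"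
    proof
      fix C assume "C \<in> dcycles ?A"
      then obtain vs where vs: "is_dcycle_list ?A vs" "C = cycle_arcs vs" unfolding dcycles_def by blast
      let ?L = "length vs"
      have dv: "distinct vs" "?L \<ge> 2" using vs unfolding is_dcycle_list_def by auto
      have ne: "vs \<noteq> []" using dv by auto
      have arc: "(vs ! i, vs ! ((i+1) mod ?L)) \<in> ?A" if "i < ?L" for i
        using vs that unfolding is_dcycle_list_def by auto
      show "C \<in> {C1, C2}"
      proof (cases "\<exists>i0<?L. 3 \<le> vs ! i0")
        case True
        then obtain i0 where i0: "i0 < ?L" "3 \<le> vs ! i0" by blast
        have allW: "\<forall>j<?L. 3 \<le> vs ! j"
          by (rule all_from_one[where P="\<lambda>x. 3 \<le> x", OF ne _ i0]) (use arc Wcl in blast)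
        have "\<forall>i<?L. (vs ! i, vs ! ((i+1) mod ?L)) \<in> cycle_arcs ?w2"
          using arc Wcl allW c2 by blast
        hence "cycle_arcs vs = cycle_arcs ?w2" by (rule cycle_arcs_sub_eq[OF _ dv(1) ne, rotated]) simp
        thus ?thesis using vs c2 by simp
      next
        case False
        hence lt: "\<forall>j<?L. vs ! j < 3" by auto
        have "\<forall>i<?L. (vs ! i, vs ! ((i+1) mod ?L)) \<in> cycle_arcs ?w1"
        proof (intro allI impI)
          fix i assume i: "i < ?L"
          have "(i+1) mod ?L < ?L" using ne by simp
          thus "(vs ! i, vs ! ((i+1) mod ?L)) \<in> cycle_arcs ?w1"
            using Tcl[OF arc[OF i]] lt i c1 by simp
        qed
        hence "cycle_arcs vs = cycle_arcs ?w1" by (rule cycle_arcs_sub_eq[OF _ dv(1) ne, rotated]) simp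
        thus ?thesis using vs c1 by simp
      qed
    qed
  qed
  have C12: "C1 \<noteq> C2" unfolding C1_def C2_def by auto
  have V1: "cycle_vertices C1 = {0,1,2}" unfolding cycle_vertices_def C1_def by auto
  have V2: "cycle_vertices C2 = {3..<3+Q}" unfolding cycle_vertices_def using fst_cycle_arcs[of ?w2] c2 by simp
  have L1: "cycle_length C1 = 3" unfolding cycle_length_def C1_def by simp
  have L2: "cycle_length C2 = Q" unfolding cycle_length_def using card_cycle_arcs[of ?w2] c2 by simp
  have sid: "is_sidigraph n ?A (\<lambda>_. 1)"
    unfolding is_sidigraph_def
  proof (intro conjI allI)
    show "?A \<subseteq> {0..<n} \<times> {0..<n}"
    proof
      fix a assume "a \<in> ?A"
      then obtain x y where a: "a = (x,y)" "(x,y) \<in> ?A" by (cases a) auto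
      have "y < n"
      proof (cases "3 \<le> x")
        case True thus ?thesis using Wcl[OF a(2) True] n unfolding C2_def
          by auto (metis Q0 add_less_mono1 le_trans less_imp_le_nat mod_less_divisor add_less_cancel_left order.strict_trans2)
      next
        case False thus ?thesis using a(2) n Q unfolding AU C1_def C2_def by auto
      qed
      thus "a \<in> {0..<n} \<times> {0..<n}" using src[OF a(2)] n a(1) by auto
    qed
    fix v show "(v, v) \<notin> ?A"
      unfolding AU C1_def C2_def using mod_succ_ne' Q by auto
  qed (simp)
  have reach: "(0, u) \<in> ?A\<^sup>*" if "u < n" for u
  proof -
    have A01: "(0,1) \<in> ?A" "(1,2) \<in> ?A" "(0,3) \<in> ?A" unfolding AU C1_def by auto
    have chain: "(3, 3 + i) \<in> ?A\<^sup>*" if "i < Q" for i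
      using that
    proof (induction i)
      case (Suc i)
      have "i \<in> {..<Q}" using Suc.prems by simp
      hence "(3 + i, 3 + (i+1) mod Q) \<in> ?A" unfolding AU C2_def by blast
      moreover have "(i+1) mod Q = Suc i" using Suc by simp
      ultimately have "(3 + i, 3 + Suc i) \<in> ?A" by simp
      thus ?case using Suc by (meson Suc_lessD rtrancl_into_rtrancl)
    qed simp
    consider "u = 0" | "u = 1" | "u = 2" | "3 \<le> u \<and> u < 3 + Q" | "3 + Q \<le> u" by linarith
    thus ?thesis
    proof cases
      case 2 thus ?thesis using A01 by auto
    next
      case 3 thus ?thesis using A01 by (meson r_into_rtrancl rtrancl_into_rtrancl)
    next
      case 4
      then obtain i where "u = 3 + i" "i < Q" by (metis add_less_cancel_left le_Suc_ex)
      thus ?thesis using chain A01 by (meson converse_rtrancl_into_rtrancl)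
    next
      case 5 hence "(0,u) \<in> ?A" unfolding AU using that by auto
      thus ?thesis by auto
    qed auto
  qed
  have conn: "underlying_connected n ?A"
    unfolding underlying_connected_def
  proof (intro ballI)
    fix u v assume u: "u \<in> {0..<n}" and v: "v \<in> {0..<n}"
    let ?R = "?A \<union> ?A\<inverse>"
    have sub: "?A\<^sup>* \<subseteq> ?R\<^sup>*" by (rule rtrancl_mono) blast
    have "(0, u) \<in> ?R\<^sup>*" "(0, v) \<in> ?R\<^sup>*" using reach u v sub by auto
    moreover have "?R\<inverse> = ?R" by auto
    ultimately have "(u, 0) \<in> ?R\<^sup>*" by (metis rtrancl_converseI)
    thus "(u, v) \<in> ?R\<^sup>*" using \<open>(0, v) \<in> ?R\<^sup>*\<close> by (meson rtrancl_trans)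
  qed
  have inD: "in_Dns n ?A (\<lambda>_. 1)"
    unfolding in_Dns_def using sid conn dcyc C12 V1 V2 by auto
  have sg: "cycle_sign (\<lambda>_. 1) C = 1" for C unfolding cycle_sign_def by simp
  show ?thesis
    unfolding is_Dnspq_def using Q n inD dcyc C12 L1 L2 sg by auto
qed


lemma odd_member:
  assumes D: "in_Dns n A sg" and od: "\<forall>C\<in>dcycles A. odd (cycle_length C)"
  obtains p q where "odd p" "odd q" "3 \<le> p" "3 \<le> q" "p + q \<le> n" "energy n A sg = Fc (real p) + Fc (real q)"
proof -
  obtain C1 C2 where dc: "dcycles A = {C1, C2}" and ne: "C1 \<noteq> C2" using in_Dns_two[OF D] by blast
  have o1: "odd (cycle_length C1)" and o2: "odd (cycle_length C2)" using od dc by auto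
  note E = energy_two[OF D dc ne o1 o2]
  have t1: "3 \<le> cycle_length C1" using E(3) o1 by (cases "cycle_length C1 = 2") auto
  have t2: "3 \<le> cycle_length C2" using E(4) o2 by (cases "cycle_length C2 = 2") auto
  show ?thesis by (rule that[OF o1 o2 t1 t2 E(2) E(1)])
qed

lemma card2_eq: assumes "card S = 2" "a \<in> S" "b \<in> S" "a \<noteq> b" shows "S = {a, b}"
proof -
  obtain x y where S: "S = {x, y}" "x \<noteq> y" using assms(1) by (metis card_2_iff)
  thus ?thesis using assms by auto
qed

lemma Dnspq_energy:
  assumes B: "is_Dnspq n 3 Q B tg" and Q: "odd Q"
  shows "energy n B tg = Fc 3 + Fc (real Q)"
proof -
  obtain C1 C2 where C: "C1 \<in> dcycles B" "C2 \<in> dcycles B" "C1 \<noteq> C2" "cycle_length C1 = 3" "cycle_length C2 = Q"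
    using B unfolding is_Dnspq_def by blast
  have D: "in_Dns n B tg" using B unfolding is_Dnspq_def by simp
  have c2: "card (dcycles B) = 2" using D unfolding in_Dns_def by simp
  have dc: "dcycles B = {C1, C2}" by (rule card2_eq[OF c2 C(1) C(2) C(3)])
  have "odd (cycle_length C1)" "odd (cycle_length C2)" using C Q by auto
  from energy_two[OF D dc C(3) this] show ?thesis using C by simp
qed

theorem theorem3p19:
  fixes n :: nat
  assumes "n > 5"
  defines "OddCls \<equiv> {(A, sg). in_Dns n A sg \<and> (\<forall>C\<in>dcycles A. odd (cycle_length C))}"
  shows "(even n \<longrightarrow>
            (\<exists>A sg. is_Dnspq n 3 (n - 3) A sg) \<and>
            (\<forall>A sg B tg. is_Dnspq n 3 (n - 3) B tg \<and> (A, sg) \<in> OddCls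
                \<longrightarrow> energy n A sg \<le> energy n B tg))
       \<and> (odd n \<longrightarrow>
            (\<exists>A sg. is_Dnspq n 3 (n - 4) A sg) \<and>
            (\<forall>A sg B tg. is_Dnspq n 3 (n - 4) B tg \<and> (A, sg) \<in> OddCls
                \<longrightarrow> energy n A sg \<le> energy n B tg))
       \<and> (\<exists>A sg. is_Dnspq n 3 3 A sg)
       \<and> (\<forall>A sg B tg. is_Dnspq n 3 3 B tg \<and> (A, sg) \<in> OddCls
                \<longrightarrow> energy n B tg \<le> energy n A sg)"
proof -
  have P1: "even n \<longrightarrow>
            (\<exists>A sg. is_Dnspq n 3 (n - 3) A sg) \<and>
            (\<forall>A sg B tg. is_Dnspq n 3 (n - 3) B tg \<and> (A, sg) \<in> OddCls
                \<longrightarrow> energy n A sg \<le> energy n B tg)"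
  proof
    assume ev: "even n"
    have "is_Dnspq n 3 (n - 3) (arcsB n (n - 3)) (\<lambda>_. 1)" by (rule construction) (use assms(1) in auto)
    hence ex: "\<exists>A sg. is_Dnspq n 3 (n - 3) A sg" by blast
    have "energy n A sg \<le> energy n B tg" if h: "is_Dnspq n 3 (n - 3) B tg" "(A, sg) \<in> OddCls" for A sg B tg
    proof -
      have hA: "in_Dns n A sg" "\<forall>C\<in>dcycles A. odd (cycle_length C)" using h(2) unfolding OddCls_def by auto
      have oQ: "odd (n - 3)" using ev assms(1) by presburger
      have EB: "energy n B tg = Fc 3 + Fc (real (n - 3))" using Dnspq_energy[OF h(1) oQ] by simp
      obtain p q where pq: "odd p" "odd q" "3 \<le> p" "3 \<le> q" "p + q \<le> n"
        and EA: "energy n A sg = Fc (real p) + Fc (real q)"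
        using odd_member[OF hA] by blast
      have r: "real p + real q \<le> real n" "3 \<le> real p" "3 \<le> real q" using pq by simp_all
      have "Fc (real q) \<le> Fc (real n - real p)" by (rule Fc_mono) (use r in linarith)+
      moreover have "Fc (real p) + Fc (real n - real p) \<le> Fc 3 + Fc (real n - 3)"
        by (rule Fc_pair) (use r in linarith)+
      moreover have "real (n - 3) = real n - 3" using assms(1) by simp
      ultimately show ?thesis unfolding EA EB by simp
    qed
    note main = this
    show "(\<exists>A sg. is_Dnspq n 3 (n - 3) A sg) \<and>
            (\<forall>A sg B tg. is_Dnspq n 3 (n - 3) B tg \<and> (A, sg) \<in> OddCls
                \<longrightarrow> energy n A sg \<le> energy n B tg)"
    proof (intro conjI allI impI)
      show "\<exists>A sg. is_Dnspq n 3 (n - 3) A sg" by (rule ex)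
      fix A sg B tg assume a: "is_Dnspq n 3 (n - 3) B tg \<and> (A, sg) \<in> OddCls"
      show "energy n A sg \<le> energy n B tg" by (rule main[OF conjunct1[OF a] conjunct2[OF a]])
    qed
  qed
  have P2: "odd n \<longrightarrow>
            (\<exists>A sg. is_Dnspq n 3 (n - 4) A sg) \<and>
            (\<forall>A sg B tg. is_Dnspq n 3 (n - 4) B tg \<and> (A, sg) \<in> OddCls
                \<longrightarrow> energy n A sg \<le> energy n B tg)"
  proof
    assume od: "odd n"
    have "is_Dnspq n 3 (n - 4) (arcsB n (n - 4)) (\<lambda>_. 1)" by (rule construction) (use assms(1) in auto)
    hence ex: "\<exists>A sg. is_Dnspq n 3 (n - 4) A sg" by blast
    have "energy n A sg \<le> energy n B tg" if h: "is_Dnspq n 3 (n - 4) B tg" "(A, sg) \<in> OddCls" for A sg B tg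
    proof -
      have hA: "in_Dns n A sg" "\<forall>C\<in>dcycles A. odd (cycle_length C)" using h(2) unfolding OddCls_def by auto
      have oQ: "odd (n - 4)" using od assms(1) by presburger
      have EB: "energy n B tg = Fc 3 + Fc (real (n - 4))" using Dnspq_energy[OF h(1) oQ] by simp
      obtain p q where pq: "odd p" "odd q" "3 \<le> p" "3 \<le> q" "p + q \<le> n"
        and EA: "energy n A sg = Fc (real p) + Fc (real q)"
        using odd_member[OF hA] by blast
      have "p + q \<noteq> n" using pq(1,2) od by presburger
      hence pq': "p + q \<le> n - 1" using pq by simp
      have r: "real p + real q \<le> real n - 1" "3 \<le> real p" "3 \<le> real q" using pq pq' assms(1) by simp_all
      have "Fc (real q) \<le> Fc ((real n - 1) - real p)" by (rule Fc_mono) (use r in linarith)+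
      moreover have "Fc (real p) + Fc ((real n - 1) - real p) \<le> Fc 3 + Fc ((real n - 1) - 3)"
        by (rule Fc_pair) (use r in linarith)+
      moreover have "real (n - 4) = (real n - 1) - 3" using assms(1) by simp
      ultimately show ?thesis unfolding EA EB by simp
    qed
    note main = this
    show "(\<exists>A sg. is_Dnspq n 3 (n - 4) A sg) \<and>
            (\<forall>A sg B tg. is_Dnspq n 3 (n - 4) B tg \<and> (A, sg) \<in> OddCls
                \<longrightarrow> energy n A sg \<le> energy n B tg)"
    proof (intro conjI allI impI)
      show "\<exists>A sg. is_Dnspq n 3 (n - 4) A sg" by (rule ex)
      fix A sg B tg assume a: "is_Dnspq n 3 (n - 4) B tg \<and> (A, sg) \<in> OddCls"
      show "energy n A sg \<le> energy n B tg" by (rule main[OF conjunct1[OF a] conjunct2[OF a]])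
    qed
  qed
  have "is_Dnspq n 3 3 (arcsB n 3) (\<lambda>_. 1)" by (rule construction) (use assms(1) in auto)
  hence P3: "\<exists>A sg. is_Dnspq n 3 3 A sg" by blast
  have P4: "energy n B tg \<le> energy n A sg" if h: "is_Dnspq n 3 3 B tg" "(A, sg) \<in> OddCls" for A sg B tg
  proof -
    have hA: "in_Dns n A sg" "\<forall>C\<in>dcycles A. odd (cycle_length C)" using h(2) unfolding OddCls_def by auto
    have EB: "energy n B tg = Fc 3 + Fc 3" using Dnspq_energy[OF h(1)] by simp
    obtain p q where pq: "odd p" "odd q" "3 \<le> p" "3 \<le> q" "p + q \<le> n"
      and EA: "energy n A sg = Fc (real p) + Fc (real q)"
      using odd_member[OF hA] by blast
    have r: "3 \<le> real p" "3 \<le> real q" using pq by simp_all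
    have "Fc 3 \<le> Fc (real p)" by (rule Fc_mono) (use r in linarith)+
    moreover have "Fc 3 \<le> Fc (real q)" by (rule Fc_mono) (use r in linarith)+
    ultimately show ?thesis unfolding EA EB by simp
  qed
  show ?thesis
  proof (intro conjI allI impI)
    show "even n \<Longrightarrow> \<exists>A sg. is_Dnspq n 3 (n - 3) A sg" using P1 by simp
    show "odd n \<Longrightarrow> \<exists>A sg. is_Dnspq n 3 (n - 4) A sg" using P2 by simp
    show "\<exists>A sg. is_Dnspq n 3 3 A sg" by (rule P3)
  next
    fix A sg B tg assume "even n" "is_Dnspq n 3 (n - 3) B tg \<and> (A, sg) \<in> OddCls"
    thus "energy n A sg \<le> energy n B tg" using P1 by simp
  next
    fix A sg B tg assume "odd n" "is_Dnspq n 3 (n - 4) B tg \<and> (A, sg) \<in> OddCls"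
    thus "energy n A sg \<le> energy n B tg" using P2 by simp
  next
    fix A sg B tg assume a: "is_Dnspq n 3 3 B tg \<and> (A, sg) \<in> OddCls"
    show "energy n B tg \<le> energy n A sg" by (rule P4[OF conjunct1[OF a] conjunct2[OF a]])
  qed
qed


end
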